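(* Let $\Omega\subset\mathbb{Z}_2^n\setminus\{\mathbf 0\}$ be nonempty and such that every $\beta\in\Omega$ has even Hamming weight. Then the transition matrix $H_\Omega(t)$ of $\mathrm{NEPS}(P_3,\ldots,P_3;\Omega)$ satisfies $H_\Omega(\pi)=I$; in particular the graph is periodic at $\pi$.
   Context: $P_3$ is the path on three vertices. For graphs $G_1,\dots,G_n$ and $\Omega\subset\mathbb{Z}_2^n\setminus\{\mathbf 0\}$, $\mathrm{NEPS}(G_1,\dots,G_n;\Omega)$ is the graph on $V(G_1)\times\cdots\times V(G_n)$ with adjacency matrix $\sum_{\beta\in\Omega}A_1^{\beta_1}\otimes\cdots\otimes A_n^{\beta_n}$, $A_i$ the adjacency matrix of $G_i$. The Hamming weight of $\beta$ is its number of entries equal to $1$. The transition matrix of a graph with adjacency matrix $A$ is $H(t)=\exp(-itA)$; a graph is periodic at $\tau\ne0$ if $H(\tau)=\gamma I$ with $|\gamma|=1$. *)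

theory Defs
  imports Complex_Main "HOL-Library.Numeral_Type"
begin

definition mat_mult :: "('v::finite \<Rightarrow> 'v \<Rightarrow> complex) \<Rightarrow> ('v \<Rightarrow> 'v \<Rightarrow> complex) \<Rightarrow> 'v \<Rightarrow> 'v \<Rightarrow> complex" where
  "mat_mult M N = (\<lambda>u w. \<Sum>v\<in>UNIV. M u v * N v w)"

definition mat_id :: "'v \<Rightarrow> 'v \<Rightarrow> complex" where
  "mat_id = (\<lambda>u v. if u = v then 1 else 0)"

fun mat_pow :: "('v::finite \<Rightarrow> 'v \<Rightarrow> complex) \<Rightarrow> nat \<Rightarrow> 'v \<Rightarrow> 'v \<Rightarrow> complex" where
  "mat_pow M 0 = mat_id"
| "mat_pow M (Suc k) = mat_mult M (mat_pow M k)"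

definition mat_exp :: "('v::finite \<Rightarrow> 'v \<Rightarrow> complex) \<Rightarrow> 'v \<Rightarrow> 'v \<Rightarrow> complex" where
  "mat_exp M = (\<lambda>u v. \<Sum>k. mat_pow M k u v / of_nat (fact k))"

definition transition :: "('v::finite \<Rightarrow> 'v \<Rightarrow> complex) \<Rightarrow> real \<Rightarrow> 'v \<Rightarrow> 'v \<Rightarrow> complex" where
  "transition A t = mat_exp (\<lambda>u v. - \<i> * complex_of_real t * A u v)"

definition periodic_at :: "('v::finite \<Rightarrow> 'v \<Rightarrow> complex) \<Rightarrow> real \<Rightarrow> bool" where
  "periodic_at A \<tau> \<longleftrightarrow> \<tau> \<noteq> 0 \<and> (\<exists>\<gamma>. cmod \<gamma> = 1 \<and> transition A \<tau> = (\<lambda>u v. \<gamma> * mat_id u v))"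

definition P3_adj :: "3 \<Rightarrow> 3 \<Rightarrow> complex" where
  "P3_adj a b = (if (a = 0 \<and> b = 1) \<or> (a = 1 \<and> b = 0) \<or> (a = 1 \<and> b = 2) \<or> (a = 2 \<and> b = 1)
                 then 1 else 0)"

text \<open>NEPS adjacency matrix: factors indexed by the finite type 'n, the basis
  \<Omega> is a set of vectors in Z_2^n represented as 'n \<Rightarrow> bool.
  Entry (x,y) of A_1^{b_1} \<otimes> ... \<otimes> A_n^{b_n} is the product of the factor entries.\<close>
definition neps_adj :: "('n::finite \<Rightarrow> 'a \<Rightarrow> 'a \<Rightarrow> complex) \<Rightarrow> ('n \<Rightarrow> bool) set
    \<Rightarrow> ('n \<Rightarrow> 'a) \<Rightarrow> ('n \<Rightarrow> 'a) \<Rightarrow> complex" where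
  "neps_adj A \<Omega> x y = (\<Sum>\<beta>\<in>\<Omega>. \<Prod>i\<in>UNIV. (if \<beta> i then A i (x i) (y i) else (if x i = y i then 1 else 0)))"

definition hamming_weight :: "('n::finite \<Rightarrow> bool) \<Rightarrow> nat" where
  "hamming_weight \<beta> = card {i. \<beta> i}"

end

theory Submission imports Defs "HOL-Library.FuncSet" "HOL-Analysis.Complex_Transcendental" begin
lemma ex3: "(x::3) = 0 \<or> x = 1 \<or> x = 2"
proof (cases x)
  case (of_int z)
  then have "z = 0 \<or> z = 1 \<or> z = 2" by auto
  then show ?thesis using of_int by auto
qed
lemma UNIV3: "(UNIV::3 set) = {0,1,2}"
  using ex3 by auto
definition r :: complex where "r = complex_of_real (sqrt 2)"
lemma rr: "r * r = 2" unfolding r_def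
  by (simp flip: of_real_mult)
lemma rr2: "r * (r * x) = 2 * x" by (simp only: mult.assoc[symmetric] rr)
definition ev :: "3 \<Rightarrow> 3 \<Rightarrow> complex" where
 "ev s a = (if s = 0 then (if a = 0 then r/2 else if a = 1 then 0 else -r/2)
   else if s = 1 then (if a = 1 then r/2 else 1/2) else (if a = 1 then - r/2 else 1/2))"
definition sg :: "3 \<Rightarrow> int" where "sg s = (if s = 0 then 0 else if s = 1 then 1 else -1)"
lemma d3: "(0::3) \<noteq> 1" "(0::3) \<noteq> 2" "(1::3) \<noteq> 2" "(1::3) \<noteq> 0" "(2::3) \<noteq> 0" "(2::3) \<noteq> 1"
  by simp_all
lemma sum3: "(\<Sum>b\<in>UNIV. f b) = f 0 + f 1 + (f (2::3) :: complex)"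
proof -
  have "(\<Sum>b\<in>UNIV. f b) = (\<Sum>b\<in>{0,1,2}. f b)" by (simp only: UNIV3)
  also have "\<dots> = f 0 + (f 1 + f 2)"
    using d3 by (subst sum.insert, simp, simp, subst sum.insert, simp, simp, simp)
  finally show ?thesis by (simp only: add.assoc)
qed
lemma evv: "ev 0 0 = r/2" "ev 0 1 = 0" "ev 0 2 = -r/2"
  "ev 1 0 = 1/2" "ev 1 1 = r/2" "ev 1 2 = 1/2"
  "ev 2 0 = 1/2" "ev 2 1 = -r/2" "ev 2 2 = 1/2"
  by (simp_all add: ev_def d3)
lemma Pv: "P3_adj 0 0 = 0" "P3_adj 0 1 = 1" "P3_adj 0 2 = 0"
  "P3_adj 1 0 = 1" "P3_adj 1 1 = 0" "P3_adj 1 2 = 1"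
  "P3_adj 2 0 = 0" "P3_adj 2 1 = 1" "P3_adj 2 2 = 0"
  by (simp_all add: P3_adj_def d3)
lemma sgv: "sg 0 = 0" "sg 1 = 1" "sg 2 = -1"
  by (simp_all add: sg_def d3)
lemma eig3: "(\<Sum>b\<in>UNIV. P3_adj a b * ev s b) = of_int (sg s) * r * ev s a"
  unfolding sum3
  using ex3[of a] ex3[of s]
  by (elim disjE) (simp_all only: evv Pv sgv, simp_all add: rr rr2 field_simps)
lemma comp3: "(\<Sum>s\<in>UNIV. ev s a * ev s b) = (if a = b then 1 else 0)"
  unfolding sum3
  using ex3[of a] ex3[of b]
  by (elim disjE) (simp_all only: evv d3 if_True if_False refl, simp_all add: rr rr2 field_simps)

lemma pow_eig:
  fixes M :: "'v::finite \<Rightarrow> 'v \<Rightarrow> complex" and E F :: "'w::finite \<Rightarrow> 'v \<Rightarrow> complex"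
  assumes eig: "\<And>w u. (\<Sum>x\<in>UNIV. M u x * E w x) = \<mu> w * E w u"
    and comp: "\<And>u v. (\<Sum>w\<in>UNIV. E w u * F w v) = mat_id u v"
  shows "mat_pow M k u v = (\<Sum>w\<in>UNIV. \<mu> w ^ k * E w u * F w v)"
proof (induction k arbitrary: u)
  case 0
  then show ?case using comp by simp
next
  case (Suc k)
  have "mat_pow M (Suc k) u v = (\<Sum>x\<in>UNIV. M u x * (\<Sum>w\<in>UNIV. \<mu> w ^ k * E w x * F w v))"
    by (simp add: mat_mult_def Suc)
  also have "\<dots> = (\<Sum>x\<in>UNIV. \<Sum>w\<in>UNIV. M u x * E w x * (\<mu> w ^ k * F w v))"
    by (simp add: sum_distrib_left mult_ac)
  also have "\<dots> = (\<Sum>w\<in>UNIV. \<Sum>x\<in>UNIV. M u x * E w x * (\<mu> w ^ k * F w v))"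
    by (rule sum.swap)
  also have "\<dots> = (\<Sum>w\<in>UNIV. (\<Sum>x\<in>UNIV. M u x * E w x) * (\<mu> w ^ k * F w v))"
    by (simp add: sum_distrib_right)
  also have "\<dots> = (\<Sum>w\<in>UNIV. \<mu> w ^ Suc k * E w u * F w v)"
    by (simp only: eig) (simp add: mult_ac)
  finally show ?case .
qed

lemma sc: "(x::complex) /\<^sub>R fact k = x / of_nat (fact k)"
  by (simp add: scaleR_conv_of_real divide_inverse mult.commute)

lemma exp_eig:
  fixes M :: "'v::finite \<Rightarrow> 'v \<Rightarrow> complex" and E F :: "'w::finite \<Rightarrow> 'v \<Rightarrow> complex"
  assumes eig: "\<And>w u. (\<Sum>x\<in>UNIV. M u x * E w x) = \<mu> w * E w u"
    and comp: "\<And>u v. (\<Sum>w\<in>UNIV. E w u * F w v) = mat_id u v"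
  shows "mat_exp M u v = (\<Sum>w\<in>UNIV. exp (\<mu> w) * E w u * F w v)"
proof -
  have "(\<lambda>k. mat_pow M k u v / of_nat (fact k)) = (\<lambda>k. \<Sum>w\<in>UNIV. (\<mu> w ^ k /\<^sub>R fact k) * (E w u * F w v))"
    by (simp add: pow_eig[OF eig comp] sum_divide_distrib sc mult_ac)
  moreover have "(\<lambda>k. \<Sum>w\<in>UNIV. (\<mu> w ^ k /\<^sub>R fact k) * (E w u * F w v)) sums (\<Sum>w\<in>UNIV. exp (\<mu> w) * (E w u * F w v))"
    by (intro sums_sum sums_mult2 exp_converges)
  ultimately show ?thesis unfolding mat_exp_def by (simp add: sums_iff mult.assoc)
qed

definition EE :: "('n::finite \<Rightarrow> 3) \<Rightarrow> ('n \<Rightarrow> 3) \<Rightarrow> complex" where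
  "EE w x = (\<Prod>i\<in>UNIV. ev (w i) (x i))"

lemma sum_prod_fun:
  fixes f :: "'n::finite \<Rightarrow> 'a::finite \<Rightarrow> complex"
  shows "(\<Sum>g\<in>UNIV. \<Prod>i\<in>UNIV. f i (g i)) = (\<Prod>i\<in>UNIV. \<Sum>a\<in>UNIV. f i a)"
  using prod_sum_PiE[of UNIV "\<lambda>_. UNIV" f] by simp

lemma compE: "(\<Sum>w\<in>UNIV. EE w u * EE w v) = mat_id u (v :: 'n::finite \<Rightarrow> 3)"
proof -
  have "(\<Sum>w\<in>UNIV. EE w u * EE w v) = (\<Sum>w\<in>UNIV. \<Prod>i\<in>UNIV. ev (w i) (u i) * ev (w i) (v i))"
    by (simp add: EE_def prod.distrib)
  also have "\<dots> = (\<Prod>i\<in>UNIV. (if u i = v i then 1 else 0))"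
    using sum_prod_fun[of "\<lambda>i a. ev a (u i) * ev a (v i)"] by (simp add: comp3)
  also have "\<dots> = mat_id u v"
  proof (cases "u = v")
    case True then show ?thesis by (simp add: mat_id_def)
  next
    case False
    then obtain i where "u i \<noteq> v i" by auto
    then have "(\<Prod>i\<in>UNIV. (if u i = v i then 1 else 0 :: complex)) = 0"
      by (intro prod_zero) auto
    then show ?thesis using False by (simp add: mat_id_def)
  qed
  finally show ?thesis .
qed

definition mu :: "('n::finite \<Rightarrow> bool) set \<Rightarrow> ('n \<Rightarrow> 3) \<Rightarrow> complex" where
  "mu \<Omega> w = (\<Sum>\<beta>\<in>\<Omega>. \<Prod>i\<in>UNIV. (if \<beta> i then of_int (sg (w i)) * r else 1))"

lemma eigE:
  "(\<Sum>y\<in>UNIV. neps_adj (\<lambda>_. P3_adj) \<Omega> x y * EE w y) = mu \<Omega> w * EE w (x :: 'n::finite \<Rightarrow> 3)"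
proof -
  have inner: "(\<Sum>a\<in>UNIV. (if \<beta> i then P3_adj (x i) a else (if x i = a then 1 else 0)) * ev (w i) a)
     = (if \<beta> i then of_int (sg (w i)) * r else 1) * ev (w i) (x i)" for \<beta> i
    by (cases "\<beta> i") (simp_all add: eig3 if_distrib[of "\<lambda>z. z * _"] cong: if_cong)
  have "(\<Sum>y\<in>UNIV. neps_adj (\<lambda>_. P3_adj) \<Omega> x y * EE w y)
     = (\<Sum>\<beta>\<in>\<Omega>. \<Sum>y\<in>UNIV. \<Prod>i\<in>UNIV. (if \<beta> i then P3_adj (x i) (y i) else (if x i = y i then 1 else 0)) * ev (w i) (y i))"
    by (simp add: neps_adj_def EE_def sum_distrib_right prod.distrib) (rule sum.swap)
  also have "\<dots> = (\<Sum>\<beta>\<in>\<Omega>. \<Prod>i\<in>UNIV. (if \<beta> i then of_int (sg (w i)) * r else 1) * ev (w i) (x i))"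
    using sum_prod_fun[of "\<lambda>i a. (if \<beta> i then P3_adj (x i) a else (if x i = a then 1 else 0)) * ev (w i) a" for \<beta>]
    by (simp add: inner)
  also have "\<dots> = mu \<Omega> w * EE w x"
    by (simp add: mu_def EE_def prod.distrib sum_distrib_right)
  finally show ?thesis .
qed

lemma prod_even:
  fixes \<beta> :: "'n::finite \<Rightarrow> bool"
  assumes "\<beta> \<noteq> (\<lambda>_. False)" "even (hamming_weight \<beta>)"
  shows "\<exists>m. (\<Prod>i\<in>UNIV. (if \<beta> i then of_int (sg (w i)) * r else 1)) = complex_of_int (2*m)"
proof -
  define c where "c = card {i. \<beta> i}"
  have "{i. \<beta> i} \<noteq> {}" using assms(1) by auto
  then have "c > 0" unfolding c_def by (simp add: card_gt_0_iff)
  moreover have "even c" using assms(2) by (simp add: c_def hamming_weight_def)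
  then obtain j where j: "c = 2 * j" by (rule evenE)
  with \<open>c > 0\<close> obtain k where k: "c = 2 * Suc k" by (cases j) auto
  have split: "(if \<beta> i then of_int (sg (w i)) * r else 1) = (if \<beta> i then of_int (sg (w i)) else 1) * (if \<beta> i then r else (1::complex))" for i
    by simp
  have p1: "(\<Prod>i\<in>UNIV. (if \<beta> i then r else (1::complex))) = r ^ c"
    by (simp add: prod.If_cases c_def)
  have r2: "r ^ 2 = 2" using rr by (simp add: power2_eq_square)
  have p2: "r ^ c = 2 * 2 ^ k" by (simp only: k power_mult r2) simp
  have p3: "(\<Prod>i\<in>UNIV. (if \<beta> i then complex_of_int (sg (w i)) else 1)) = of_int (\<Prod>i\<in>UNIV. (if \<beta> i then sg (w i) else 1))"
    by (subst of_int_prod) (rule prod.cong, auto)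
  show ?thesis
    by (rule exI[of _ "(\<Prod>i\<in>UNIV. (if \<beta> i then sg (w i) else 1)) * 2 ^ k"])
       (simp add: split prod.distrib p1 p2 p3)
qed

lemma mu_even:
  fixes \<Omega> :: "('n::finite \<Rightarrow> bool) set"
  assumes "\<forall>\<beta>\<in>\<Omega>. \<beta> \<noteq> (\<lambda>_. False)" "\<forall>\<beta>\<in>\<Omega>. even (hamming_weight \<beta>)"
  shows "\<exists>m. mu \<Omega> w = complex_of_int (2*m)"
proof -
  have "\<forall>\<beta>\<in>\<Omega>. \<exists>m. (\<Prod>i\<in>UNIV. (if \<beta> i then of_int (sg (w i)) * r else 1)) = complex_of_int (2*m)"
    using prod_even assms by blast
  then obtain f where f: "\<forall>\<beta>\<in>\<Omega>. (\<Prod>i\<in>UNIV. (if \<beta> i then of_int (sg (w i)) * r else 1)) = complex_of_int (2 * f \<beta>)"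
    by (rule bchoice[elim_format]) blast
  have "mu \<Omega> w = (\<Sum>\<beta>\<in>\<Omega>. complex_of_int (2 * f \<beta>))"
    unfolding mu_def using f by (intro sum.cong) auto
  also have "\<dots> = complex_of_int (2 * (\<Sum>\<beta>\<in>\<Omega>. f \<beta>))"
    by (simp add: sum_distrib_left)
  finally show ?thesis by blast
qed

theorem corollary3p5:
  fixes \<Omega> :: "('n::finite \<Rightarrow> bool) set"
  assumes "\<Omega> \<noteq> {}"
    and "\<forall>\<beta>\<in>\<Omega>. \<beta> \<noteq> (\<lambda>_. False)"
    and "\<forall>\<beta>\<in>\<Omega>. even (hamming_weight \<beta>)"
  shows "transition (neps_adj (\<lambda>_. P3_adj) \<Omega>) pi = mat_id
         \<and> periodic_at (neps_adj (\<lambda>_. P3_adj) \<Omega>) pi"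
proof -
  let ?A = "neps_adj (\<lambda>_. P3_adj) \<Omega>"
  let ?M = "\<lambda>u v. - \<i> * complex_of_real pi * ?A u v"
  have eig: "(\<Sum>x\<in>UNIV. ?M u x * EE w x) = (- \<i> * complex_of_real pi * mu \<Omega> w) * EE w u" for w u
  proof -
    have "(\<Sum>x\<in>UNIV. ?M u x * EE w x) = - \<i> * complex_of_real pi * (\<Sum>x\<in>UNIV. ?A u x * EE w x)"
      by (simp add: sum_distrib_left mult.assoc)
    then show ?thesis by (simp add: eigE)
  qed
  have ex1: "exp (- \<i> * complex_of_real pi * mu \<Omega> w) = 1" for w
  proof -
    obtain m where m: "mu \<Omega> w = complex_of_int (2*m)" using mu_even assms(2,3) by blast
    have "exp (- \<i> * complex_of_real pi * mu \<Omega> w) = exp ((2 * complex_of_int (-m) * pi) * \<i>)"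
      by (simp add: m algebra_simps)
    also have "\<dots> = 1" using exp_integer_2pi[of "real_of_int (-m)"] by simp
    finally show ?thesis .
  qed
  have T: "transition ?A pi = mat_id"
  proof (intro ext)
    fix u v
    have "transition ?A pi u v = (\<Sum>w\<in>UNIV. exp (- \<i> * complex_of_real pi * mu \<Omega> w) * EE w u * EE w v)"
      unfolding transition_def by (rule exp_eig[OF eig compE])
    also have "\<dots> = mat_id u v" unfolding ex1 mult_1_left by (rule compE)
    finally show "transition ?A pi u v = mat_id u v" .
  qed
  moreover have "periodic_at ?A pi"
    unfolding periodic_at_def using T by (intro conjI exI[of _ 1]) auto
  ultimately show ?thesis by blast
qed
end
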